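(* Let $q>0$ with $q\ne 1$, let $t\ge 0$, and set $$A=\begin{pmatrix} q & \sqrt t\\ 0 & -1\end{pmatrix},\qquad B=\begin{pmatrix} q & 0\\ -\sqrt t & -1\end{pmatrix}.$$ Then $$\|AB-qBA\|_F^2=t^2(1+q^2)+2t(1+q)(1+q^3)+(1-q)^2(1+q^4).$$ Let $f(t)=\|AB-qBA\|_F^2/(\|A\|_F^2\|B\|_F^2)$. On $t\ge 0$, $f$ attains its maximum at $t_{\max}=\frac{3q^4+2q^2+3}{(1-q)^2}$, where $$f(t_{\max})=\frac{1-h(q)x(q)}{1-x(q)}\,(1+q^2),\qquad x(q)=\frac{q(1-q)^2}{2(1+q^4)},\quad h(q)=\frac{(1+q)^2}{2(1+q^2)}.$$ Moreover $f(t_{\max})>1+q^2$. Consequently, for every $q>0$ with $q\neq 1$, there exist $A,B\in M_2(\mathbb{C})$ with $\|AB-qBA\|_F^2>(1+q^2)\|A\|_F^2\|B\|_F^2$.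
   Context: $\|X\|_F=\sqrt{\operatorname{tr}(XX^\dagger)}$ denotes the Frobenius norm. *)

theory Defs
  imports "HOL-Analysis.Analysis"
begin

definition conj_transpose :: "complex^'n^'n \<Rightarrow> complex^'n^'n" where
  "conj_transpose X = (\<chi> i j. cnj (X $ j $ i))"

definition frob_norm :: "complex^'n^'n \<Rightarrow> real" where
  "frob_norm X = sqrt (Re (trace (X ** conj_transpose X)))"

definition matA :: "real \<Rightarrow> real \<Rightarrow> complex^2^2" where
  "matA q t = vector [vector [complex_of_real q, complex_of_real (sqrt t)],
                      vector [0, -1]]"

definition matB :: "real \<Rightarrow> real \<Rightarrow> complex^2^2" where
  "matB q t = vector [vector [complex_of_real q, 0],
                      vector [- complex_of_real (sqrt t), -1]]"

definition qcomm :: "real \<Rightarrow> complex^'n^'n \<Rightarrow> complex^'n^'n \<Rightarrow> complex^'n^'n" where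
  "qcomm q A B = A ** B - q *\<^sub>R (B ** A)"

definition ratio_f :: "real \<Rightarrow> real \<Rightarrow> real" where
  "ratio_f q t = (frob_norm (qcomm q (matA q t) (matB q t)))\<^sup>2 /
                 ((frob_norm (matA q t))\<^sup>2 * (frob_norm (matB q t))\<^sup>2)"

end

theory Submission imports Defs begin
lemma frob2: "(frob_norm (X::complex^2^2))\<^sup>2 = (cmod (X$1$1))\<^sup>2 + (cmod (X$1$2))\<^sup>2 + (cmod (X$2$1))\<^sup>2 + (cmod (X$2$2))\<^sup>2"
proof -
  have e: "\<And>z. z * cnj z = complex_of_real ((cmod z)\<^sup>2)" by (metis complex_norm_square of_real_power)
  have "Re (trace (X ** conj_transpose X)) = (cmod (X$1$1))\<^sup>2 + (cmod (X$1$2))\<^sup>2 + (cmod (X$2$1))\<^sup>2 + (cmod (X$2$2))\<^sup>2"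
    by (simp add: trace_def matrix_matrix_mult_def conj_transpose_def sum_2 e)
  moreover have "0 \<le> (cmod (X$1$1))\<^sup>2 + (cmod (X$1$2))\<^sup>2 + (cmod (X$2$1))\<^sup>2 + (cmod (X$2$2))\<^sup>2" by simp
  ultimately show ?thesis by (simp add: frob_norm_def)
qed

lemma normA: "t \<ge> 0 \<Longrightarrow> (frob_norm (matA q t))\<^sup>2 = q\<^sup>2 + t + 1"
  by (simp add: frob2 matA_def norm_of_real)
lemma normB: "t \<ge> 0 \<Longrightarrow> (frob_norm (matB q t))\<^sup>2 = q\<^sup>2 + t + 1"
  by (simp add: frob2 matB_def norm_of_real)
lemma normC: "t \<ge> 0 \<Longrightarrow> (frob_norm (qcomm q (matA q t) (matB q t)))\<^sup>2 =
   t\<^sup>2 * (1 + q\<^sup>2) + 2 * t * (1 + q) * (1 + q ^ 3) + (1 - q)\<^sup>2 * (1 + q ^ 4)"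
proof -
  assume t: "t \<ge> 0"
  have s: "sqrt t * sqrt t = t" using t by simp
  have "(frob_norm (qcomm q (matA q t) (matB q t)))\<^sup>2 = (q^2 - t - q^3)^2 + 2*(sqrt t + q^2 * sqrt t)^2 + (1 - q + q*t)^2"
    apply (simp add: frob2 qcomm_def matA_def matB_def matrix_matrix_mult_def sum_2 cmod_power2)
    using t apply (simp add: power2_eq_square algebra_simps s power3_eq_cube)
    done
  also have "\<dots> = t\<^sup>2 * (1 + q\<^sup>2) + 2 * t * (1 + q) * (1 + q ^ 3) + (1 - q)\<^sup>2 * (1 + q ^ 4)"
    using t by (simp add: eval_nat_numeral algebra_simps s)
  finally show ?thesis .
qed
lemma key:
  fixes q u :: real
  assumes q: "q > 0" and u: "u > 0"
  defines "P \<equiv> 2 - q + 2*q^2 - q^3 + 2*q^4"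
  shows "P > 0"
    and "(1+q^2)*u^2 + 2*q*(1-q)^2*u - 2*q*P \<le> (1 + q^2 + q*(1-q)^4/(2*P)) * u^2"
    and "u = 2*P/(1-q)^2 \<Longrightarrow> q \<noteq> 1 \<Longrightarrow> (1+q^2)*u^2 + 2*q*(1-q)^2*u - 2*q*P = (1 + q^2 + q*(1-q)^4/(2*P)) * u^2"
proof -
  have h1: "q^3 \<le> q^4 + q^2"
  proof -
    have "q^2 * ((q-1)^2 + q) \<ge> 0" using q by simp
    thus ?thesis by (simp add: algebra_simps eval_nat_numeral)
  qed
  have h2: "q \<le> q^2 + 1"
  proof -
    have "(q-1)^2 + q \<ge> 0" using q by simp
    thus ?thesis by (simp add: algebra_simps eval_nat_numeral)
  qed
  show P: "P > 0" unfolding P_def using h1 h2 by (smt (verit) zero_less_power q)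
  have eq: "(1 + q^2 + q*(1-q)^4/(2*P)) * u^2 - ((1+q^2)*u^2 + 2*q*(1-q)^2*u - 2*q*P)
        = (2*q*(1-q)^2*u - 4*q*P)^2 / (8*q*P)"
    using P q by (simp add: field_simps eval_nat_numeral)
  have "(2*q*(1-q)^2*u - 4*q*P)^2 / (8*q*P) \<ge> 0" using P q by simp
  with eq show "(1+q^2)*u^2 + 2*q*(1-q)^2*u - 2*q*P \<le> (1 + q^2 + q*(1-q)^4/(2*P)) * u^2" by linarith
  assume uu: "u = 2*P/(1-q)^2" and q1: "q \<noteq> 1"
  have "2*q*(1-q)^2*u - 4*q*P = 0" using q1 by (simp add: uu)
  with eq show "(1+q^2)*u^2 + 2*q*(1-q)^2*u - 2*q*P = (1 + q^2 + q*(1-q)^4/(2*P)) * u^2" by simp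
qed
lemma Npoly: "(t::real)\<^sup>2 * (1 + q\<^sup>2) + 2 * t * (1 + q) * (1 + q ^ 3) + (1 - q)\<^sup>2 * (1 + q ^ 4)
  = (1+q^2)*(1+q^2+t)^2 + 2*q*(1-q)^2*(1+q^2+t) - 2*q*(2 - q + 2*q^2 - q^3 + 2*q^4)"
  by (simp add: algebra_simps eval_nat_numeral)

lemma ratio_eq: "t \<ge> 0 \<Longrightarrow> ratio_f q t =
   ((1+q^2)*(1+q^2+t)^2 + 2*q*(1-q)^2*(1+q^2+t) - 2*q*(2 - q + 2*q^2 - q^3 + 2*q^4)) / (1+q^2+t)^2"
proof -
  assume t: "t \<ge> 0"
  have e: "(q\<^sup>2 + t + 1) * (q\<^sup>2 + t + 1) = (1+q^2+t)^2" by (simp add: power2_eq_square algebra_simps)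
  show ?thesis unfolding ratio_f_def normA[OF t] normB[OF t] normC[OF t] Npoly e ..
qed

theorem mainTheorem4:
  fixes q :: real
  assumes "q > 0" and "q \<noteq> 1"
  shows "(\<forall>t::real. t \<ge> 0 \<longrightarrow>
            (frob_norm (qcomm q (matA q t) (matB q t)))\<^sup>2 =
              t\<^sup>2 * (1 + q\<^sup>2) + 2 * t * (1 + q) * (1 + q ^ 3) + (1 - q)\<^sup>2 * (1 + q ^ 4))
      \<and> (let tmax = (3 * q ^ 4 + 2 * q\<^sup>2 + 3) / (1 - q)\<^sup>2;
             x = q * (1 - q)\<^sup>2 / (2 * (1 + q ^ 4));
             h = (1 + q)\<^sup>2 / (2 * (1 + q\<^sup>2))
         in tmax \<ge> 0
            \<and> (\<forall>t::real. t \<ge> 0 \<longrightarrow> ratio_f q t \<le> ratio_f q tmax)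
            \<and> ratio_f q tmax = (1 - h * x) / (1 - x) * (1 + q\<^sup>2)
            \<and> ratio_f q tmax > 1 + q\<^sup>2)
      \<and> (\<exists>A B :: complex^2^2.
            (frob_norm (qcomm q A B))\<^sup>2 > (1 + q\<^sup>2) * (frob_norm A)\<^sup>2 * (frob_norm B)\<^sup>2)"
proof -
  have q: "q > 0" and q1: "q \<noteq> 1" using assms by auto
  define P where "P = 2 - q + 2*q^2 - q^3 + 2*q^4"
  define M where "M = 1 + q^2 + q*(1-q)^4/(2*P)"
  define tmax where "tmax = (3 * q ^ 4 + 2 * q\<^sup>2 + 3) / (1 - q)\<^sup>2"
  define x where "x = q * (1 - q)\<^sup>2 / (2 * (1 + q ^ 4))"
  define h where "h = (1 + q)\<^sup>2 / (2 * (1 + q\<^sup>2))"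
  have Ppos: "P > 0" unfolding P_def using key(1)[OF q, of 1] by simp
  have sq: "(1-q)^2 > 0" using q1 by simp
  have tpos: "tmax \<ge> 0" unfolding tmax_def using sq by (intro divide_nonneg_pos) (auto intro: add_nonneg_nonneg)
  have le: "ratio_f q t \<le> M" if t: "t \<ge> 0" for t
  proof -
    have u: "1+q^2+t > 0" using t by (smt (verit) zero_le_power2)
    show ?thesis unfolding ratio_eq[OF t] M_def P_def
      using key(2)[OF q u] u by (simp add: pos_divide_le_eq)
  qed
  have uval: "1+q^2+tmax = 2*P/(1-q)^2"
    unfolding tmax_def P_def using sq by (simp add: field_simps eval_nat_numeral)
  have fmax: "ratio_f q tmax = M"
  proof -
    have u: "1+q^2+tmax > 0" using tpos by (smt (verit) zero_le_power2)
    show ?thesis unfolding ratio_eq[OF tpos] M_def P_def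
      using key(3)[OF q u uval[unfolded P_def] q1] u by simp
  qed
  have Mgt: "M > 1 + q^2" unfolding M_def using Ppos q sq by simp
  have d: "1 + q^4 > 0" using q by (simp add: add_pos_nonneg)
  have d2: "1 + q^2 > 0" by (simp add: add_pos_nonneg)
  have e1: "1 - x = P/(2*(1+q^4))" unfolding x_def P_def using d by (simp add: field_simps eval_nat_numeral)
  have e2: "1 - h*x = (4*(1+q^2)*(1+q^4) - q*(1-q^2)^2)/(4*(1+q^2)*(1+q^4))"
  proof -
    have D: "4*(1+q^2)*(1+q^4) \<noteq> 0" using d d2 by simp
    have hx: "h*x = ((1+q)^2*(q*(1-q)^2))/(4*(1+q^2)*(1+q^4))"
      unfolding h_def x_def by (simp add: algebra_simps)
    have pe: "(1+q)^2*(q*(1-q)^2) = q*(1-q^2)^2" by (simp add: algebra_simps eval_nat_numeral)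
    show ?thesis unfolding hx pe using D by (simp add: diff_divide_eq_iff)
  qed
  have e3: "4*(1+q^2)*(1+q^4) - q*(1-q^2)^2 = 2*(1+q^2)*P + q*(1-q)^4"
    unfolding P_def by (simp add: algebra_simps eval_nat_numeral)
  have Mform: "M = (1 - h * x) / (1 - x) * (1 + q\<^sup>2)"
  proof -
    have g: "\<And>K a E P::real. a > 0 \<Longrightarrow> E > 0 \<Longrightarrow> P > 0 \<Longrightarrow> (K/(4*a*E)) / (P/(2*E)) * a = K/(2*P)"
      by (simp add: field_simps)
    have "(1 - h * x) / (1 - x) * (1 + q\<^sup>2) = (2*(1+q^2)*P + q*(1-q)^4)/(2*P)"
      unfolding e1 e2 e3 using g[OF d2 d Ppos] by simp
    also have "\<dots> = M" unfolding M_def using Ppos by (simp add: add_divide_distrib)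
    finally show ?thesis by simp
  qed
  have part1: "\<forall>t::real. t \<ge> 0 \<longrightarrow>
            (frob_norm (qcomm q (matA q t) (matB q t)))\<^sup>2 =
              t\<^sup>2 * (1 + q\<^sup>2) + 2 * t * (1 + q) * (1 + q ^ 3) + (1 - q)\<^sup>2 * (1 + q ^ 4)"
    using normC by blast
  have ex: "\<exists>A B :: complex^2^2.
            (frob_norm (qcomm q A B))\<^sup>2 > (1 + q\<^sup>2) * (frob_norm A)\<^sup>2 * (frob_norm B)\<^sup>2"
  proof (intro exI)
    let ?D = "(frob_norm (matA q tmax))\<^sup>2 * (frob_norm (matB q tmax))\<^sup>2"
    have D: "?D > 0" using normA[OF tpos] normB[OF tpos] tpos by (simp add: add_nonneg_pos)
    have "ratio_f q tmax > 1 + q^2" using fmax Mgt by simp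
    hence "(frob_norm (qcomm q (matA q tmax) (matB q tmax)))\<^sup>2 / ?D > 1 + q^2" unfolding ratio_f_def .
    with D show "(frob_norm (qcomm q (matA q tmax) (matB q tmax)))\<^sup>2 > (1 + q\<^sup>2) * (frob_norm (matA q tmax))\<^sup>2 * (frob_norm (matB q tmax))\<^sup>2"
      by (simp add: pos_less_divide_eq mult.assoc)
  qed
  show ?thesis
    unfolding Let_def tmax_def[symmetric] x_def[symmetric] h_def[symmetric]
    using part1 ex tpos le fmax Mform Mgt by auto
qed
end
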